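(* Let $\epsilon>0$, $\tilde\ell>0$, $\lambda_0=4$, $\lambda_*=\lambda_0/(4\pi^2)$, and suppose that for a small constant $c>0$ $$\Big|j^2\frac{\epsilon^2}{\tilde\ell^2}-\lambda_*\Big|\ge\frac{c\,\epsilon}{\tilde\ell}\quad\text{for all }j\in\mathbb N.$$ Then for every $d\in L^2(0,2\pi)$ there exists a unique solution $\mathfrak e\in H^2(0,2\pi)$ of $$\epsilon^2\frac{4\pi^2}{\tilde\ell^2}\mathfrak e''+\lambda_0\mathfrak e=d\ \text{ in }(0,2\pi),\qquad \mathfrak e(0)=\mathfrak e(2\pi),\ \mathfrak e'(0)=\mathfrak e'(2\pi),$$ and it satisfies $$\|\mathfrak e\|_{L^\infty(0,2\pi)}^2+\frac{\epsilon^2}{\tilde\ell^2}\|\mathfrak e'\|_{L^2(0,2\pi)}^2+\frac{\epsilon^4}{\tilde\ell^4}\|\mathfrak e''\|_{L^2(0,2\pi)}^2\le C\frac{\tilde\ell^2}{\epsilon^2}\|d\|_{L^2(0,2\pi)}^2$$ for a constant $C$. *)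

theory Defs
  imports "HOL-Analysis.Analysis"
begin

text \<open>Functions on the interval (0, 2 pi), represented as real-valued functions on the reals
  whose values outside [0, 2 pi] are irrelevant.\<close>

definition lambda0 :: real where "lambda0 = 4"
definition lambda_star :: real where "lambda_star = lambda0 / (4 * pi^2)"

definition L2_on :: "(real \<Rightarrow> real) \<Rightarrow> bool" where
  "L2_on f \<longleftrightarrow> f measurable_on {0..2*pi} \<and> (\<lambda>x. (f x)^2) integrable_on {0..2*pi}"

definition L2_norm_sq :: "(real \<Rightarrow> real) \<Rightarrow> real" where
  "L2_norm_sq f = integral {0..2*pi} (\<lambda>x. (f x)^2)"

text \<open>Squared L-infinity norm of a (continuous) function on [0, 2 pi].\<close>
definition Linf_norm_sq :: "(real \<Rightarrow> real) \<Rightarrow> real" where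
  "Linf_norm_sq f = (SUP x\<in>{0..2*pi}. \<bar>f x\<bar>)^2"

text \<open>e is in H2(0, 2 pi) with weak first derivative e1 and weak second derivative e2:
  e2 in L2, e1 is the primitive of e2 and e is the primitive of e1 (on [0, 2 pi]).\<close>
definition H2_derivs :: "(real \<Rightarrow> real) \<Rightarrow> (real \<Rightarrow> real) \<Rightarrow> (real \<Rightarrow> real) \<Rightarrow> bool" where
  "H2_derivs e e1 e2 \<longleftrightarrow> L2_on e2 \<and>
     (\<forall>x\<in>{0..2*pi}. e1 x = e1 0 + integral {0..x} e2 \<and> e x = e 0 + integral {0..x} e1)"

definition periodic_sol ::
  "real \<Rightarrow> real \<Rightarrow> (real \<Rightarrow> real) \<Rightarrow> (real \<Rightarrow> real) \<Rightarrow> (real \<Rightarrow> real) \<Rightarrow> (real \<Rightarrow> real) \<Rightarrow> bool" where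
  "periodic_sol eps l d e e1 e2 \<longleftrightarrow> H2_derivs e e1 e2 \<and>
     (AE x in lebesgue. x \<in> {0<..<2*pi} \<longrightarrow> eps^2 * (4 * pi^2 / l^2) * e2 x + lambda0 * e x = d x) \<and>
     e 0 = e (2*pi) \<and> e1 0 = e1 (2*pi)"

end

theory Submission
  imports Defs
begin


lemma BP_key:
  fixes u g :: "real \<Rightarrow> real"
  assumes g: "g absolutely_integrable_on {a..b}"
    and ug: "(\<lambda>t. u t * g t) integrable_on {a..b}"
    and L: "\<And>s t. \<bar>u s - u t\<bar> \<le> K * \<bar>s - t\<bar>" and K: "K \<ge> 0"
    and pq: "a \<le> p" "p \<le> q" "q \<le> b" and z: "z \<in> {p..q}"
  shows "\<bar>u z * (integral {a..q} g - integral {a..p} g) - (integral {a..q} (\<lambda>t. u t * g t) - integral {a..p} (\<lambda>t. u t * g t))\<bar>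
     \<le> K * (q - p) * (integral {a..q} (\<lambda>t. \<bar>g t\<bar>) - integral {a..p} (\<lambda>t. \<bar>g t\<bar>))"
proof -
  have gi: "g integrable_on {a..b}" and agi: "(\<lambda>t. \<bar>g t\<bar>) integrable_on {a..b}"
    using g unfolding absolutely_integrable_on_def by auto
  have sub: "{a..q} \<subseteq> {a..b}" "{p..q} \<subseteq> {a..b}" using pq by auto
  have c1: "integral {a..q} g - integral {a..p} g = integral {p..q} g"
    using Henstock_Kurzweil_Integration.integral_combine[of a p q g] integrable_on_subinterval[OF gi sub(1)] pq by simp
  have c2: "integral {a..q} (\<lambda>t. u t * g t) - integral {a..p} (\<lambda>t. u t * g t) = integral {p..q} (\<lambda>t. u t * g t)"
    using Henstock_Kurzweil_Integration.integral_combine[of a p q "\<lambda>t. u t * g t"] integrable_on_subinterval[OF ug sub(1)] pq by simp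
  have c3: "integral {a..q} (\<lambda>t. \<bar>g t\<bar>) - integral {a..p} (\<lambda>t. \<bar>g t\<bar>) = integral {p..q} (\<lambda>t. \<bar>g t\<bar>)"
    using Henstock_Kurzweil_Integration.integral_combine[of a p q "\<lambda>t. \<bar>g t\<bar>"] integrable_on_subinterval[OF agi sub(1)] pq by simp
  have gi2: "g integrable_on {p..q}" using integrable_on_subinterval[OF gi sub(2)] .
  have ugi2: "(\<lambda>t. u t * g t) integrable_on {p..q}" using integrable_on_subinterval[OF ug sub(2)] .
  have agi2: "(\<lambda>t. \<bar>g t\<bar>) integrable_on {p..q}" using integrable_on_subinterval[OF agi sub(2)] .
  have "u z * integral {p..q} g - integral {p..q} (\<lambda>t. u t * g t) = integral {p..q} (\<lambda>t. (u z - u t) * g t)"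
  proof -
    have "integral {p..q} (\<lambda>t. u z * g t - u t * g t) = integral {p..q} (\<lambda>t. u z * g t) - integral {p..q} (\<lambda>t. u t * g t)"
      using gi2 ugi2 by (intro integral_diff integrable_on_mult_right) auto
    then show ?thesis by (simp add: left_diff_distrib)
  qed
  moreover have "\<bar>integral {p..q} (\<lambda>t. (u z - u t) * g t)\<bar> \<le> integral {p..q} (\<lambda>t. K * (q - p) * \<bar>g t\<bar>)"
  proof -
    have "norm (integral {p..q} (\<lambda>t. (u z - u t) * g t)) \<le> integral {p..q} (\<lambda>t. K * (q - p) * \<bar>g t\<bar>)"
    proof (rule integral_norm_bound_integral)
      show "(\<lambda>t. (u z - u t) * g t) integrable_on {p..q}"
        using gi2 ugi2 unfolding left_diff_distrib by (intro integrable_diff integrable_on_mult_right)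
      show "(\<lambda>t. K * (q - p) * \<bar>g t\<bar>) integrable_on {p..q}"
        using agi2 by (rule integrable_on_mult_right)
      fix t assume t: "t \<in> {p..q}"
      have "\<bar>u z - u t\<bar> \<le> K * (q - p)"
      proof -
        have "\<bar>z - t\<bar> \<le> q - p" using z t by auto
        then have "K * \<bar>z - t\<bar> \<le> K * (q - p)" using K by (rule mult_left_mono)
        then show ?thesis using L[of z t] by linarith
      qed
      then show "norm ((u z - u t) * g t) \<le> K * (q - p) * \<bar>g t\<bar>"
        by (simp add: abs_mult mult_right_mono)
    qed
    then show ?thesis by simp
  qed
  moreover have "integral {p..q} (\<lambda>t. K * (q - p) * \<bar>g t\<bar>) = K * (q - p) * integral {p..q} (\<lambda>t. \<bar>g t\<bar>)"
    by simp
  ultimately show ?thesis using c1 c2 c3 by simp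
qed

lemma BP_deriv:
  fixes u u' g :: "real \<Rightarrow> real"
  assumes g: "g absolutely_integrable_on {a..b}"
    and ug: "(\<lambda>t. u t * g t) integrable_on {a..b}"
    and du: "\<And>t. (u has_real_derivative u' t) (at t)"
    and L: "\<And>s t. \<bar>u s - u t\<bar> \<le> K * \<bar>s - t\<bar>" and K: "K \<ge> 0"
    and x: "x \<in> {a..b}"
  shows "((\<lambda>y. u y * integral {a..y} g - integral {a..y} (\<lambda>t. u t * g t)) has_real_derivative
           u' x * integral {a..x} g) (at x within {a..b})"
proof -
  define H where "H y = integral {a..y} g" for y
  define W where "W y = integral {a..y} (\<lambda>t. u t * g t)" for y
  define J where "J y = integral {a..y} (\<lambda>t. \<bar>g t\<bar>)" for y
  have gi: "g integrable_on {a..b}" and agi: "(\<lambda>t. \<bar>g t\<bar>) integrable_on {a..b}"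
    using g unfolding absolutely_integrable_on_def by auto
  have Hc: "continuous_on {a..b} H" unfolding H_def by (rule indefinite_integral_continuous_1[OF gi])
  have Jc: "continuous_on {a..b} J" unfolding J_def by (rule indefinite_integral_continuous_1[OF agi])
  have lim1: "((\<lambda>y. (u y - u x) / (y - x)) \<longlongrightarrow> u' x) (at x within {a..b})"
    using du[of x] unfolding has_field_derivative_iff by (rule tendsto_within_subset) auto
  have lim2: "(H \<longlongrightarrow> H x) (at x within {a..b})"
    using Hc x unfolding continuous_on_def by auto
  have limJ: "(J \<longlongrightarrow> J x) (at x within {a..b})"
    using Jc x unfolding continuous_on_def by auto
  have lim4: "((\<lambda>y. K * \<bar>J y - J x\<bar>) \<longlongrightarrow> 0) (at x within {a..b})"
  proof -
    have "((\<lambda>y. K * \<bar>J y - J x\<bar>) \<longlongrightarrow> K * \<bar>J x - J x\<bar>) (at x within {a..b})"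
      by (intro tendsto_intros limJ)
    then show ?thesis by simp
  qed
  have lim3: "((\<lambda>y. ((u x * H y - W y) - (u x * H x - W x)) / (y - x)) \<longlongrightarrow> 0) (at x within {a..b})"
  proof (rule Lim_null_comparison[OF _ lim4])
    show "\<forall>\<^sub>F y in at x within {a..b}. norm (((u x * H y - W y) - (u x * H x - W x)) / (y - x)) \<le> K * \<bar>J y - J x\<bar>"
      unfolding eventually_at
    proof (intro exI[of _ 1] conjI ballI impI zero_less_one)
      fix y assume y: "y \<in> {a..b}" and yx: "y \<noteq> x \<and> dist y x < 1"
      have "\<bar>(u x * H y - W y) - (u x * H x - W x)\<bar> \<le> K * \<bar>y - x\<bar> * \<bar>J y - J x\<bar>"
      proof (cases "x < y")
        case True
        have "\<bar>u x * (H y - H x) - (W y - W x)\<bar> \<le> K * (y - x) * (J y - J x)"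
          unfolding H_def W_def J_def
          by (rule BP_key[OF g ug L K]) (use x y True in auto)
        moreover have "J y - J x \<ge> 0"
        proof -
          have "K * (y - x) * (J y - J x) \<ge> 0" using calculation by linarith
          show ?thesis
          proof -
            have "J y - J x = integral {x..y} (\<lambda>t. \<bar>g t\<bar>)"
              unfolding J_def using Henstock_Kurzweil_Integration.integral_combine[of a x y "\<lambda>t. \<bar>g t\<bar>"]
                integrable_on_subinterval[OF agi, of a y] x y True by simp
            also have "\<dots> \<ge> 0" by (rule integral_nonneg) (use integrable_on_subinterval[OF agi, of x y] x y in auto)
            finally show ?thesis by simp
          qed
        qed
        ultimately show ?thesis using True by (simp add: algebra_simps)
      next
        case False
        then have "y < x" using yx by auto
        have "\<bar>u x * (H x - H y) - (W x - W y)\<bar> \<le> K * (x - y) * (J x - J y)"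
          unfolding H_def W_def J_def
          by (rule BP_key[OF g ug L K]) (use x y \<open>y < x\<close> in auto)
        moreover have "J x - J y \<ge> 0"
        proof -
          have "J x - J y = integral {y..x} (\<lambda>t. \<bar>g t\<bar>)"
            unfolding J_def using Henstock_Kurzweil_Integration.integral_combine[of a y x "\<lambda>t. \<bar>g t\<bar>"]
              integrable_on_subinterval[OF agi, of a x] x y \<open>y < x\<close> by simp
          also have "\<dots> \<ge> 0" by (rule integral_nonneg) (use integrable_on_subinterval[OF agi, of y x] x y in auto)
          finally show ?thesis by simp
        qed
        ultimately show ?thesis using \<open>y < x\<close> by (simp add: algebra_simps abs_minus_commute)
      qed
      then show "norm (((u x * H y - W y) - (u x * H x - W x)) / (y - x)) \<le> K * \<bar>J y - J x\<bar>"
        using yx by (simp add: divide_le_eq abs_divide mult.commute mult.left_commute)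
    qed
  qed
  have "((\<lambda>y. (u y - u x) / (y - x) * H y + ((u x * H y - W y) - (u x * H x - W x)) / (y - x))
      \<longlongrightarrow> u' x * H x + 0) (at x within {a..b})"
    by (intro tendsto_add tendsto_mult lim1 lim2 lim3)
  moreover have "(\<lambda>y. (u y - u x) / (y - x) * H y + ((u x * H y - W y) - (u x * H x - W x)) / (y - x))
     = (\<lambda>y. ((u y * H y - W y) - (u x * H x - W x)) / (y - x))"
    by (rule ext) (simp add: add_divide_distrib[symmetric] times_divide_eq_left algebra_simps)
  ultimately show ?thesis
    unfolding has_field_derivative_iff H_def W_def by simp
qed

lemma BP:
  fixes u u' g :: "real \<Rightarrow> real"
  assumes g: "g absolutely_integrable_on {a..b}"
    and ug: "(\<lambda>t. u t * g t) integrable_on {a..b}"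
    and du: "\<And>t. (u has_real_derivative u' t) (at t)"
    and L: "\<And>s t. \<bar>u s - u t\<bar> \<le> K * \<bar>s - t\<bar>" and K: "K \<ge> 0"
    and x: "x \<in> {a..b}"
  shows "u x * integral {a..x} g - integral {a..x} (\<lambda>t. u t * g t) = integral {a..x} (\<lambda>t. u' t * integral {a..t} g)"
proof -
  have "((\<lambda>t. u' t * integral {a..t} g) has_integral
     ((u x * integral {a..x} g - integral {a..x} (\<lambda>t. u t * g t)) - (u a * integral {a..a} g - integral {a..a} (\<lambda>t. u t * g t)))) {a..x}"
  proof (rule fundamental_theorem_of_calculus)
    show "a \<le> x" using x by auto
    fix y assume y: "y \<in> {a..x}"
    have "((\<lambda>y. u y * integral {a..y} g - integral {a..y} (\<lambda>t. u t * g t)) has_real_derivative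
           u' y * integral {a..y} g) (at y within {a..b})"
      by (rule BP_deriv[OF g ug du L K]) (use x y in auto)
    then have "((\<lambda>y. u y * integral {a..y} g - integral {a..y} (\<lambda>t. u t * g t)) has_real_derivative
           u' y * integral {a..y} g) (at y within {a..x})"
      by (rule has_field_derivative_subset) (use x in auto)
    then show "((\<lambda>y. u y * integral {a..y} g - integral {a..y} (\<lambda>t. u t * g t)) has_vector_derivative
           u' y * integral {a..y} g) (at y within {a..x})"
      by (simp add: has_real_derivative_iff_has_vector_derivative)
  qed
  then show ?thesis by (simp add: integral_unique)
qed

lemma lip_sin: fixes w y t :: real assumes w: "w \<ge> 0" shows "\<bar>sin (w * y) - sin (w * t)\<bar> \<le> w * \<bar>y - t\<bar>"
proof -
  have "\<bar>sin (w * y) - sin (w * t)\<bar> = 2 * \<bar>sin ((w * y - w * t)/2)\<bar> * \<bar>cos ((w * y + w * t)/2)\<bar>"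
    by (simp add: sin_diff_sin abs_mult)
  also have "\<dots> \<le> 2 * \<bar>(w * y - w * t)/2\<bar> * 1"
    by (intro mult_mono abs_sin_x_le_abs_x abs_cos_le_one) auto
  also have "\<dots> = w * \<bar>y - t\<bar>" using w by (simp add: abs_mult right_diff_distrib[symmetric])
  finally show ?thesis .
qed

lemma lip_cos: fixes w y t :: real assumes w: "w \<ge> 0" shows "\<bar>cos (w * y) - cos (w * t)\<bar> \<le> w * \<bar>y - t\<bar>"
proof -
  have "\<bar>cos (w * y) - cos (w * t)\<bar> = 2 * \<bar>sin ((w * y + w * t)/2)\<bar> * \<bar>sin ((w * t - w * y)/2)\<bar>"
    by (simp add: cos_diff_cos abs_mult)
  also have "\<dots> \<le> 2 * 1 * \<bar>(w * t - w * y)/2\<bar>"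
    by (intro mult_mono abs_sin_x_le_abs_x abs_sin_le_one) auto
  also have "\<dots> = w * \<bar>y - t\<bar>" using w by (simp add: abs_mult right_diff_distrib[symmetric] abs_minus_commute)
  finally show ?thesis .
qed

lemma abs_int_cont_mult:
  fixes g phi :: "real \<Rightarrow> real"
  assumes "continuous_on {a..b} phi" "g absolutely_integrable_on {a..b}"
  shows "(\<lambda>x. phi x * g x) absolutely_integrable_on {a..b}"
proof (rule absolutely_integrable_bounded_measurable_product_real)
  show "phi \<in> borel_measurable (lebesgue_on {a..b})"
    using assms(1) by (rule continuous_imp_measurable_on_sets_lebesgue) simp
  show "bounded (phi ` {a..b})"
    using assms(1) by (intro compact_imp_bounded compact_continuous_image) auto
qed (use assms in auto)

lemma abs_int_imp_int: "(g::real\<Rightarrow>real) absolutely_integrable_on S \<Longrightarrow> g integrable_on S"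
  by (simp add: absolutely_integrable_on_def)

lemma FTC_eq:
  fixes F F' :: "real \<Rightarrow> real"
  assumes "\<And>t. (F has_real_derivative F' t) (at t)" "0 \<le> x"
  shows "integral {0..x} F' = F x - F 0"
proof -
  have "(F' has_integral (F x - F 0)) {0..x}"
    using assms by (intro fundamental_theorem_of_calculus)
      (auto simp: has_real_derivative_iff_has_vector_derivative[symmetric] intro: has_field_derivative_at_within)
  then show ?thesis by (rule integral_unique)
qed

lemma EX1:
  fixes d :: "real \<Rightarrow> real" and w A B :: real
  assumes d: "d absolutely_integrable_on {0..2*pi}" and w: "w > 0"
  defines "f \<equiv> \<lambda>t. w^2/4 * d t"
  defines "S \<equiv> \<lambda>x. integral {0..x} (\<lambda>t. cos (w * t) * f t)"
  defines "Cc \<equiv> \<lambda>x. integral {0..x} (\<lambda>t. sin (w * t) * f t)"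
  defines "e \<equiv> \<lambda>x. A * cos (w * x) + B * sin (w * x) + (sin (w * x) * S x - cos (w * x) * Cc x) / w"
  defines "e1 \<equiv> \<lambda>x. w * (B * cos (w * x) - A * sin (w * x)) + cos (w * x) * S x + sin (w * x) * Cc x"
  assumes x: "x \<in> {0..2*pi}"
  shows "e x = e 0 + integral {0..x} e1 \<and> e1 x = e1 0 + integral {0..x} (\<lambda>t. f t - w^2 * e t)"
proof -
  let ?I = "{0..2*pi}"
  have fa: "f absolutely_integrable_on ?I" unfolding f_def using d by simp
  have ca: "(\<lambda>t. cos (w * t) * f t) absolutely_integrable_on ?I"
    by (rule abs_int_cont_mult[OF _ fa]) (intro continuous_intros)
  have sa: "(\<lambda>t. sin (w * t) * f t) absolutely_integrable_on ?I"
    by (rule abs_int_cont_mult[OF _ fa]) (intro continuous_intros)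
  have sca: "(\<lambda>t. sin (w * t) * (cos (w * t) * f t)) integrable_on ?I"
    by (rule abs_int_imp_int, rule abs_int_cont_mult[OF _ ca]) (intro continuous_intros)
  have cca: "(\<lambda>t. cos (w * t) * (cos (w * t) * f t)) integrable_on ?I"
    by (rule abs_int_imp_int, rule abs_int_cont_mult[OF _ ca]) (intro continuous_intros)
  have csa: "(\<lambda>t. cos (w * t) * (sin (w * t) * f t)) integrable_on ?I"
    by (rule abs_int_imp_int, rule abs_int_cont_mult[OF _ sa]) (intro continuous_intros)
  have ssa: "(\<lambda>t. sin (w * t) * (sin (w * t) * f t)) integrable_on ?I"
    by (rule abs_int_imp_int, rule abs_int_cont_mult[OF _ sa]) (intro continuous_intros)
  have dsin: "\<And>t. ((\<lambda>t. sin (w * t)) has_real_derivative w * cos (w * t)) (at t)"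
    by (auto intro!: derivative_eq_intros)
  have dcos: "\<And>t. ((\<lambda>t. cos (w * t)) has_real_derivative - (w * sin (w * t))) (at t)"
    by (auto intro!: derivative_eq_intros)
  have ls: "\<And>y t. \<bar>sin (w * y) - sin (w * t)\<bar> \<le> w * \<bar>y - t\<bar>" using lip_sin w by simp
  have lc: "\<And>y t. \<bar>cos (w * y) - cos (w * t)\<bar> \<le> w * \<bar>y - t\<bar>" using lip_cos w by simp
  have wK: "w \<ge> 0" using w by simp
  have Sc: "continuous_on ?I S" unfolding S_def by (rule indefinite_integral_continuous_1, rule abs_int_imp_int[OF ca])
  have Ccc: "continuous_on ?I Cc" unfolding Cc_def by (rule indefinite_integral_continuous_1, rule abs_int_imp_int[OF sa])
  have sub: "{0..x} \<subseteq> ?I" using x by auto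
  have Sc': "continuous_on {0..x} S" using Sc sub by (rule continuous_on_subset)
  have Ccc': "continuous_on {0..x} Cc" using Ccc sub by (rule continuous_on_subset)
  have ia: "sin (w * x) * S x - integral {0..x} (\<lambda>t. sin (w * t) * (cos (w * t) * f t)) = integral {0..x} (\<lambda>t. w * cos (w * t) * S t)"
    unfolding S_def by (rule BP[OF ca sca dsin ls wK x])
  have ib: "cos (w * x) * Cc x - integral {0..x} (\<lambda>t. cos (w * t) * (sin (w * t) * f t)) = integral {0..x} (\<lambda>t. - (w * sin (w * t)) * Cc t)"
    unfolding Cc_def by (rule BP[OF sa csa dcos lc wK x])
  have ic: "cos (w * x) * S x - integral {0..x} (\<lambda>t. cos (w * t) * (cos (w * t) * f t)) = integral {0..x} (\<lambda>t. - (w * sin (w * t)) * S t)"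
    unfolding S_def by (rule BP[OF ca cca dcos lc wK x])
  have id: "sin (w * x) * Cc x - integral {0..x} (\<lambda>t. sin (w * t) * (sin (w * t) * f t)) = integral {0..x} (\<lambda>t. w * cos (w * t) * Cc t)"
    unfolding Cc_def by (rule BP[OF sa ssa dsin ls wK x])
  have x0: "0 \<le> x" using x by auto
  have S0: "S 0 = 0" "Cc 0 = 0" unfolding S_def Cc_def by auto
  have int1: "(\<lambda>t. cos (w * t) * S t) integrable_on {0..x}"
    by (rule integrable_continuous_interval) (intro continuous_intros Sc')
  have int2: "(\<lambda>t. sin (w * t) * Cc t) integrable_on {0..x}"
    by (rule integrable_continuous_interval) (intro continuous_intros Ccc')
  have int3: "(\<lambda>t. sin (w * t) * S t) integrable_on {0..x}"
    by (rule integrable_continuous_interval) (intro continuous_intros Sc')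
  have int4: "(\<lambda>t. cos (w * t) * Cc t) integrable_on {0..x}"
    by (rule integrable_continuous_interval) (intro continuous_intros Ccc')
  have int5: "(\<lambda>t. w * (B * cos (w * t) - A * sin (w * t))) integrable_on {0..x}"
    by (rule integrable_continuous_interval) (intro continuous_intros)
  have int6: "(\<lambda>t. w^2 * (A * cos (w * t) + B * sin (w * t))) integrable_on {0..x}"
    by (rule integrable_continuous_interval) (intro continuous_intros)
  have smooth1: "integral {0..x} (\<lambda>t. w * (B * cos (w * t) - A * sin (w * t))) = A * cos (w * x) + B * sin (w * x) - A"
  proof -
    have "\<And>t. ((\<lambda>t. A * cos (w * t) + B * sin (w * t)) has_real_derivative w * (B * cos (w * t) - A * sin (w * t))) (at t)"
      by (auto intro!: derivative_eq_intros simp: algebra_simps)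
    from FTC_eq[OF this x0] show ?thesis by simp
  qed
  have smooth2: "integral {0..x} (\<lambda>t. w^2 * (A * cos (w * t) + B * sin (w * t))) = w * (A * sin (w * x) - B * cos (w * x)) + w * B"
  proof -
    have "\<And>t. ((\<lambda>t. w * (A * sin (w * t) - B * cos (w * t))) has_real_derivative w^2 * (A * cos (w * t) + B * sin (w * t))) (at t)"
      by (auto intro!: derivative_eq_intros simp: algebra_simps power2_eq_square)
    from FTC_eq[OF this x0] show ?thesis by simp
  qed
  have eqsc: "integral {0..x} (\<lambda>t. sin (w * t) * (cos (w * t) * f t)) = integral {0..x} (\<lambda>t. cos (w * t) * (sin (w * t) * f t))"
    by (simp add: mult.left_commute)
  have E1: "e x = e 0 + integral {0..x} e1"
  proof -
    have "integral {0..x} e1 = integral {0..x} (\<lambda>t. w * (B * cos (w * t) - A * sin (w * t))) + integral {0..x} (\<lambda>t. cos (w * t) * S t) + integral {0..x} (\<lambda>t. sin (w * t) * Cc t)"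
      unfolding e1_def using int1 int2 int5 by (simp add: integral_add integrable_add)
    moreover have "integral {0..x} (\<lambda>t. w * cos (w * t) * S t) = w * integral {0..x} (\<lambda>t. cos (w * t) * S t)"
      by (simp add: mult.assoc)
    moreover have "integral {0..x} (\<lambda>t. - (w * sin (w * t)) * Cc t) = - w * integral {0..x} (\<lambda>t. sin (w * t) * Cc t)"
      by (simp add: mult.assoc)
    ultimately have h1: "integral {0..x} e1 = A * cos (w * x) + B * sin (w * x) - A + integral {0..x} (\<lambda>t. cos (w * t) * S t) + integral {0..x} (\<lambda>t. sin (w * t) * Cc t)"
      and h2: "sin (w * x) * S x - integral {0..x} (\<lambda>t. cos (w * t) * (sin (w * t) * f t)) = w * integral {0..x} (\<lambda>t. cos (w * t) * S t)"
      and h3: "cos (w * x) * Cc x - integral {0..x} (\<lambda>t. cos (w * t) * (sin (w * t) * f t)) = - w * integral {0..x} (\<lambda>t. sin (w * t) * Cc t)"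
      using ia ib smooth1 eqsc by auto
    have "sin (w * x) * S x - cos (w * x) * Cc x = w * (integral {0..x} (\<lambda>t. cos (w * t) * S t) + integral {0..x} (\<lambda>t. sin (w * t) * Cc t))"
      using h2 h3 by (simp add: algebra_simps)
    then have "(sin (w * x) * S x - cos (w * x) * Cc x) / w = integral {0..x} (\<lambda>t. cos (w * t) * S t) + integral {0..x} (\<lambda>t. sin (w * t) * Cc t)"
      using w by simp
    then show ?thesis using h1 unfolding e_def by (simp add: S0)
  qed
  have E2: "e1 x = e1 0 + integral {0..x} (\<lambda>t. f t - w^2 * e t)"
  proof -
    have fi: "f integrable_on {0..x}" using abs_int_imp_int[OF fa] sub by (rule integrable_on_subinterval)
    have ew: "\<And>t. w^2 * e t = w^2 * (A * cos (w * t) + B * sin (w * t)) + w * (sin (w * t) * S t) - w * (cos (w * t) * Cc t)"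
      unfolding e_def using w by (simp add: field_simps power2_eq_square)
    have "integral {0..x} (\<lambda>t. f t - w^2 * e t) = integral {0..x} f - (integral {0..x} (\<lambda>t. w^2 * (A * cos (w * t) + B * sin (w * t))) + w * integral {0..x} (\<lambda>t. sin (w * t) * S t) - w * integral {0..x} (\<lambda>t. cos (w * t) * Cc t))"
      unfolding ew using fi int3 int4 int6
      by (simp add: integral_add integral_diff integrable_add integrable_diff integrable_on_mult_right)
    moreover have "integral {0..x} (\<lambda>t. cos (w * t) * (cos (w * t) * f t)) + integral {0..x} (\<lambda>t. sin (w * t) * (sin (w * t) * f t)) = integral {0..x} f"
    proof -
      have "integral {0..x} (\<lambda>t. cos (w * t) * (cos (w * t) * f t)) + integral {0..x} (\<lambda>t. sin (w * t) * (sin (w * t) * f t))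
         = integral {0..x} (\<lambda>t. cos (w * t) * (cos (w * t) * f t) + sin (w * t) * (sin (w * t) * f t))"
        using integrable_on_subinterval[OF cca sub] integrable_on_subinterval[OF ssa sub] by (simp add: integral_add)
      also have "\<dots> = integral {0..x} f"
      proof -
        have "\<And>t. cos (w * t) * (cos (w * t) * f t) + sin (w * t) * (sin (w * t) * f t) = f t"
        proof -
          fix t
          have "cos (w * t) * (cos (w * t) * f t) + sin (w * t) * (sin (w * t) * f t) = ((sin (w * t))^2 + (cos (w * t))^2) * f t"
            by (simp only: power2_eq_square algebra_simps)
          then show "cos (w * t) * (cos (w * t) * f t) + sin (w * t) * (sin (w * t) * f t) = f t" by (simp only: sin_cos_squared_add mult_1)
        qed
        then show ?thesis by simp
      qed
      finally show ?thesis .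
    qed
    moreover have "integral {0..x} (\<lambda>t. - (w * sin (w * t)) * S t) = - w * integral {0..x} (\<lambda>t. sin (w * t) * S t)"
      by (simp add: mult.assoc)
    moreover have "integral {0..x} (\<lambda>t. w * cos (w * t) * Cc t) = w * integral {0..x} (\<lambda>t. cos (w * t) * Cc t)"
      by (simp add: mult.assoc)
    ultimately show ?thesis using ic id smooth2 unfolding e1_def
      by (simp add: S0 algebra_simps)
  qed
  show ?thesis using E1 E2 by simp
qed

lemma deriv_prim:
  fixes g g1 :: "real \<Rightarrow> real"
  assumes c: "continuous_on {0..b} g1" and e: "\<And>x. x \<in> {0..b} \<Longrightarrow> g x = k + integral {0..x} g1"
    and x: "x \<in> {0..b}"
  shows "(g has_real_derivative g1 x) (at x within {0..b})"
proof -
  have "((\<lambda>u. k + integral {0..u} g1) has_real_derivative g1 x) (at x within {0..b})"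
    using integral_has_vector_derivative[OF c x]
    by (auto simp: has_real_derivative_iff_has_vector_derivative intro!: derivative_eq_intros)
  then show ?thesis
    by (rule has_field_derivative_transform_within[where d=1]) (use x e in auto)
qed

lemma UNIQ:
  fixes g g1 :: "real \<Rightarrow> real" and w :: real
  assumes w: "w > 0" and cw: "cos (w * (2*pi)) \<noteq> 1"
    and gc: "continuous_on {0..2*pi} g" and g1c: "continuous_on {0..2*pi} g1"
    and e1: "\<And>x. x \<in> {0..2*pi} \<Longrightarrow> g1 x = g1 0 + integral {0..x} (\<lambda>t. - (w^2 * g t))"
    and e0: "\<And>x. x \<in> {0..2*pi} \<Longrightarrow> g x = g 0 + integral {0..x} g1"
    and p0: "g (2*pi) = g 0" and p1: "g1 (2*pi) = g1 0"
  shows "\<forall>x\<in>{0..2*pi}. g x = 0"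
proof -
  let ?I = "{0..2*pi}"
  define a where "a = g 0"
  define v where "v = g1 0 / w"
  define h where "h x = g x - a * cos (w * x) - v * sin (w * x)" for x
  define h1 where "h1 x = g1 x + a * w * sin (w * x) - v * w * cos (w * x)" for x
  have dg: "\<And>x. x \<in> ?I \<Longrightarrow> (g has_real_derivative g1 x) (at x within ?I)"
    by (rule deriv_prim[OF g1c e0])
  have ngc: "continuous_on ?I (\<lambda>t. - (w^2 * g t))" by (intro continuous_intros gc)
  have dg1: "\<And>x. x \<in> ?I \<Longrightarrow> (g1 has_real_derivative - (w^2 * g x)) (at x within ?I)"
    by (rule deriv_prim[OF ngc e1])
  have dh: "\<And>x. x \<in> ?I \<Longrightarrow> (h has_real_derivative h1 x) (at x within ?I)"
  proof -
    fix x assume x: "x \<in> ?I"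
    have "(h has_real_derivative (g1 x - a * (- sin (w * x) * w) - v * (cos (w * x) * w))) (at x within ?I)"
      unfolding h_def by (intro derivative_eq_intros) (auto intro: dg[OF x])
    then show "(h has_real_derivative h1 x) (at x within ?I)"
      by (rule DERIV_cong) (simp add: h1_def algebra_simps)
  qed
  have dh1: "\<And>x. x \<in> ?I \<Longrightarrow> (h1 has_real_derivative - (w^2 * h x)) (at x within ?I)"
  proof -
    fix x assume x: "x \<in> ?I"
    have "(h1 has_real_derivative (- (w^2 * g x) + a * w * (cos (w * x) * w) - v * w * (- sin (w * x) * w))) (at x within ?I)"
      unfolding h1_def by (intro derivative_eq_intros) (auto intro: dg1[OF x])
    then show "(h1 has_real_derivative - (w^2 * h x)) (at x within ?I)"
      by (rule DERIV_cong) (simp add: h_def algebra_simps power2_eq_square)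
  qed
  define E where "E x = (h1 x)^2 + w^2 * (h x)^2" for x
  have dE: "\<And>x. x \<in> ?I \<Longrightarrow> (E has_real_derivative 0) (at x within ?I)"
  proof -
    fix x assume x: "x \<in> ?I"
    have "(E has_real_derivative (2 * h1 x * (- (w^2 * h x)) + w^2 * (2 * h x * h1 x))) (at x within ?I)"
      unfolding E_def by (rule derivative_eq_intros dh[OF x] dh1[OF x] refl)+ (simp add: algebra_simps)
    then show "(E has_real_derivative 0) (at x within ?I)" by (simp add: algebra_simps)
  qed
  obtain k where k: "\<forall>x\<in>?I. E x = k"
    using has_field_derivative_zero_constant[OF convex_real_interval(5) dE] by auto
  have E0: "E 0 = 0" unfolding E_def h_def h1_def a_def v_def using w by simp
  have hz: "\<And>x. x \<in> ?I \<Longrightarrow> h x = 0 \<and> h1 x = 0"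
  proof -
    fix x assume x: "x \<in> ?I"
    have "E x = 0" using k E0 x by (metis atLeastAtMost_iff order_refl pi_ge_zero mult_nonneg_nonneg zero_le_numeral)
    then have "(h1 x)^2 + w^2 * (h x)^2 = 0" unfolding E_def .
    moreover have "(h1 x)^2 \<ge> 0" "w^2 * (h x)^2 \<ge> 0" by auto
    ultimately have "(h1 x)^2 = 0" "w^2 * (h x)^2 = 0" by linarith+
    then show "h x = 0 \<and> h1 x = 0" using w by simp
  qed
  define cc where "cc = cos (w * (2*pi))"
  define ss where "ss = sin (w * (2*pi))"
  have tp: "2*pi \<in> ?I" by simp
  have q1: "a * (cc - 1) + v * ss = 0" using hz[OF tp] p0 unfolding h_def cc_def ss_def a_def by (simp add: algebra_simps)
  have q2: "- a * ss + v * (cc - 1) = 0"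
  proof -
    have "g1 0 + a * w * ss - v * w * cc = 0" using hz[OF tp] p1 unfolding h1_def cc_def ss_def by simp
    moreover have "g1 0 = v * w" unfolding v_def using w by simp
    ultimately have "w * (- a * ss + v * (cc - 1)) = 0" by (simp add: algebra_simps)
    then show ?thesis using w by simp
  qed
  have Qnz: "(cc - 1)^2 + ss^2 \<noteq> 0" using cw unfolding cc_def by (simp add: add_nonneg_eq_0_iff)
  have "a * ((cc - 1)^2 + ss^2) = (cc - 1) * (a * (cc - 1) + v * ss) - ss * (- a * ss + v * (cc - 1))"
    by (simp add: algebra_simps power2_eq_square)
  then have "a * ((cc - 1)^2 + ss^2) = 0" using q1 q2 by simp
  then have a0: "a = 0" using Qnz by (metis mult_eq_0_iff)
  have "v * ((cc - 1)^2 + ss^2) = ss * (a * (cc - 1) + v * ss) + (cc - 1) * (- a * ss + v * (cc - 1))"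
    by (simp add: algebra_simps power2_eq_square)
  then have "v * ((cc - 1)^2 + ss^2) = 0" using q1 q2 by simp
  then have v0: "v = 0" using Qnz by (metis mult_eq_0_iff)
  show ?thesis
  proof
    fix x assume x: "x \<in> ?I"
    show "g x = 0" using hz[OF x] a0 v0 unfolding h_def by simp
  qed
qed



lemma L2_abs:
  assumes "L2_on d"
  shows "d absolutely_integrable_on {0..2*pi}"
proof (rule measurable_bounded_by_integrable_imp_absolutely_integrable[where g = "\<lambda>x. (1 + (d x)^2) / 2"])
  show "d \<in> borel_measurable (lebesgue_on {0..2*pi})"
    using assms unfolding L2_on_def by (simp add: measurable_on_iff_borel_measurable)
  show "(\<lambda>x. (1 + (d x)^2) / 2) integrable_on {0..2*pi}"
    using assms unfolding L2_on_def by (intro integrable_on_divide integrable_add integrable_const_ivl) auto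
  fix x
  have "0 \<le> (\<bar>d x\<bar> - 1)^2" by simp
  then show "norm (d x) \<le> (1 + (d x)^2) / 2" by (simp add: power2_eq_square algebra_simps)
qed simp

lemma SOLN:
  fixes eps l :: real and d f f1 f2 :: "real \<Rightarrow> real"
  assumes ps: "periodic_sol eps l d f f1 f2" and eps: "eps > 0" and l: "l > 0"
    and d: "d absolutely_integrable_on {0..2*pi}"
  defines "w \<equiv> l / (pi * eps)"
  shows "continuous_on {0..2*pi} f \<and> continuous_on {0..2*pi} f1 \<and>
    (\<forall>x\<in>{0..2*pi}. f1 x = f1 0 + integral {0..x} (\<lambda>t. w^2/4 * d t - w^2 * f t)) \<and>
    (\<forall>x\<in>{0..2*pi}. f x = f 0 + integral {0..x} f1) \<and> f 0 = f (2*pi) \<and> f1 0 = f1 (2*pi)"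
proof -
  let ?I = "{0..2*pi}"
  have L2: "L2_on f2" and H: "\<forall>x\<in>?I. f1 x = f1 0 + integral {0..x} f2 \<and> f x = f 0 + integral {0..x} f1"
    and AE: "AE x in lebesgue. x \<in> {0<..<2*pi} \<longrightarrow> eps^2 * (4 * pi^2 / l^2) * f2 x + lambda0 * f x = d x"
    and per: "f 0 = f (2*pi)" "f1 0 = f1 (2*pi)"
    using ps unfolding periodic_sol_def H2_derivs_def by blast+
  have f2i: "f2 integrable_on ?I" using L2_abs[OF L2] abs_int_imp_int by blast
  have f1c: "continuous_on ?I f1"
  proof (rule continuous_on_eq)
    show "continuous_on ?I (\<lambda>x. f1 0 + integral {0..x} f2)"
      by (rule continuous_on_add[OF continuous_on_const indefinite_integral_continuous_1[OF f2i]])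
  next
    fix x assume x: "x \<in> ?I"
    have "f1 x = f1 0 + integral {0..x} f2" using H x by blast
    then show "f1 0 + integral {0..x} f2 = f1 x" by (rule sym)
  qed
  have f1i: "f1 integrable_on ?I" by (rule integrable_continuous_interval[OF f1c])
  have fc: "continuous_on ?I f"
  proof (rule continuous_on_eq)
    show "continuous_on ?I (\<lambda>x. f 0 + integral {0..x} f1)"
      by (rule continuous_on_add[OF continuous_on_const indefinite_integral_continuous_1[OF f1i]])
  next
    fix x assume x: "x \<in> ?I"
    have "f x = f 0 + integral {0..x} f1" using H x by blast
    then show "f 0 + integral {0..x} f1 = f x" by (rule sym)
  qed
  obtain N where N: "\<And>x. x \<in> space lebesgue - N \<Longrightarrow> (x \<in> {0<..<2*pi} \<longrightarrow> eps^2 * (4 * pi^2 / l^2) * f2 x + lambda0 * f x = d x)"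
    and Nn: "N \<in> null_sets lebesgue"
    using AE_E3[OF AE] by blast
  have negl: "negligible (N \<union> {0, 2*pi})"
  proof -
    have "negligible N" using Nn by (simp add: negligible_iff_null_sets)
    then show ?thesis by (simp add: negligible_insert)
  qed
  have wpos: "w > 0" unfolding w_def using eps l by simp
  have Zeq: "eps^2 * (4 * pi^2 / l^2) = 4 / w^2"
    unfolding w_def using eps l by (simp add: field_simps power2_eq_square)
  have eq1: "\<forall>x\<in>?I. f1 x = f1 0 + integral {0..x} (\<lambda>t. w^2/4 * d t - w^2 * f t)"
  proof
    fix x assume x: "x \<in> ?I"
    have "integral {0..x} f2 = integral {0..x} (\<lambda>t. w^2/4 * d t - w^2 * f t)"
    proof (rule integral_spike[OF negl])
      fix t assume t: "t \<in> {0..x} - (N \<union> {0, 2*pi})"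
      then have "t \<in> {0<..<2*pi}" using x by auto
      then have "eps^2 * (4 * pi^2 / l^2) * f2 t + lambda0 * f t = d t" using N[of t] t by auto
      then have "4 / w^2 * f2 t + 4 * f t = d t" unfolding Zeq lambda0_def .
      then show "w^2/4 * d t - w^2 * f t = f2 t" using wpos by (simp add: field_simps)
    qed
    then show "f1 x = f1 0 + integral {0..x} (\<lambda>t. w^2/4 * d t - w^2 * f t)" using H x by (metis (no_types, lifting))
  qed
  have H2: "\<forall>x\<in>?I. f x = f 0 + integral {0..x} f1" using H by blast
  show ?thesis using fc f1c eq1 H2 per by blast
qed



lemma amgm_t: fixes t y :: real assumes t: "t > 0" shows "2 * \<bar>y\<bar> \<le> t * y^2 + 1 / t"
proof -
  have "t * y^2 + 1 / t - 2 * \<bar>y\<bar> = (t * \<bar>y\<bar> - 1)^2 / t"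
    using t by (simp add: field_simps power2_eq_square)
  also have "\<dots> \<ge> 0" using t by simp
  finally show ?thesis by simp
qed

lemma CS:
  fixes d :: "real \<Rightarrow> real"
  assumes ab: "a \<le> b" and d: "d absolutely_integrable_on {a..b}" and d2: "(\<lambda>x. (d x)^2) integrable_on {a..b}"
  shows "(integral {a..b} (\<lambda>x. \<bar>d x\<bar>))^2 \<le> (b - a) * integral {a..b} (\<lambda>x. (d x)^2)"
proof -
  define M where "M = integral {a..b} (\<lambda>x. \<bar>d x\<bar>)"
  define N where "N = integral {a..b} (\<lambda>x. (d x)^2)"
  have ad: "(\<lambda>x. \<bar>d x\<bar>) integrable_on {a..b}" using d unfolding absolutely_integrable_on_def by auto
  have M0: "M \<ge> 0" unfolding M_def by (rule integral_nonneg[OF ad]) auto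
  have N0: "N \<ge> 0" unfolding N_def by (rule integral_nonneg[OF d2]) auto
  have key: "2 * M \<le> t * N + (b - a) / t" if t: "t > 0" for t
  proof -
    have "integral {a..b} (\<lambda>x. 2 * \<bar>d x\<bar>) \<le> integral {a..b} (\<lambda>x. t * (d x)^2 + 1 / t)"
      by (rule integral_le) (use ad d2 amgm_t[OF t] in \<open>auto intro!: integrable_add integrable_on_mult_right integrable_const_ivl\<close>)
    also have "integral {a..b} (\<lambda>x. t * (d x)^2 + 1 / t) = t * N + (b - a) / t"
    proof -
      have "integral {a..b} (\<lambda>x. t * (d x)^2 + 1 / t) = integral {a..b} (\<lambda>x. t * (d x)^2) + integral {a..b} (\<lambda>x. 1 / t)"
        by (rule integral_add) (use d2 in \<open>auto intro: integrable_on_mult_right integrable_const_ivl\<close>)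
      then show ?thesis unfolding N_def using ab by (simp add: content_real divide_inverse)
    qed
    finally show ?thesis unfolding M_def by simp
  qed
  show ?thesis
  proof (cases "M = 0")
    case True then show ?thesis using N0 ab unfolding M_def N_def by simp
  next
    case False
    then have Mp: "M > 0" using M0 by simp
    show ?thesis
    proof (cases "N = 0")
      case True
      have "2 * M \<le> (b - a) / ((b - a + 1) / M)" using key[of "(b - a + 1) / M"] Mp ab True by simp
      also have "\<dots> = (b - a) * M / (b - a + 1)" using Mp ab by (simp add: field_simps)
      also have "\<dots> \<le> M" using Mp ab by (simp add: field_simps)
      finally show ?thesis using Mp by simp
    next
      case False
      then have Np: "N > 0" using N0 by simp
      have "2 * M \<le> M / N * N + (b - a) / (M / N)" using key[of "M / N"] Mp Np by simp
      then have "M \<le> (b - a) * N / M" using Mp Np by (simp add: field_simps)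
      then have "M * M \<le> (b - a) * N" using Mp by (simp add: field_simps)
      then show ?thesis unfolding M_def N_def by (simp add: power2_eq_square)
    qed
  qed
qed



lemma beta_exists:
  fixes c :: real assumes c: "c > 0"
  shows "\<exists>\<beta>>0. \<forall>w>0. (\<forall>j::nat. \<bar>(real j)^2 - w^2\<bar> \<ge> c * pi * w) \<longrightarrow> 2 - 2 * cos (w * (2*pi)) \<ge> \<beta>"
proof -
  define a where "a = c * pi"
  have a: "a > 0" unfolding a_def using c by simp
  define \<delta> where "\<delta> = min (a / 2) (a * a / (2 * a + 1))"
  have dpos: "\<delta> > 0" unfolding \<delta>_def using a by simp
  obtain \<beta> where bpos: "\<beta> > 0" and bb: "\<forall>t\<in>{\<delta>..1-\<delta>}. 2 - 2 * cos (t * (2*pi)) \<ge> \<beta>"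
  proof (cases "\<delta> \<le> 1 - \<delta>")
    case False
    then show ?thesis using that[of 1] by auto
  next
    case True
    obtain t0 where t0: "t0 \<in> {\<delta>..1-\<delta>}" and mn: "\<forall>t\<in>{\<delta>..1-\<delta>}. 2 - 2 * cos (t0 * (2*pi)) \<le> 2 - 2 * cos (t * (2*pi))"
    proof -
      have "continuous_on {\<delta>..1-\<delta>} (\<lambda>t. 2 - 2 * cos (t * (2*pi)))" by (intro continuous_intros)
      then have "\<exists>x\<in>{\<delta>..1-\<delta>}. \<forall>y\<in>{\<delta>..1-\<delta>}. 2 - 2 * cos (x * (2*pi)) \<le> 2 - 2 * cos (y * (2*pi))"
        using continuous_attains_inf[of "{\<delta>..1-\<delta>}" "\<lambda>t. 2 - 2 * cos (t * (2*pi))"] True by auto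
      then show ?thesis using that by blast
    qed
    have "cos (t0 * (2*pi)) \<noteq> 1"
    proof
      assume "cos (t0 * (2*pi)) = 1"
      then obtain n :: int where n: "t0 * (2*pi) = real_of_int n * 2 * pi" using cos_one_2pi_int by blast
      then have "t0 = real_of_int n" by simp
      moreover have "0 < t0" "t0 < 1" using t0 dpos by auto
      ultimately have "0 < n" "n < 1" by simp_all
      then show False by simp
    qed
    moreover have "cos (t0 * (2*pi)) \<le> 1" by simp
    ultimately have "2 - 2 * cos (t0 * (2*pi)) > 0" by linarith
    then show ?thesis using that mn by blast
  qed
  show ?thesis
  proof (intro exI[of _ \<beta>] conjI bpos allI impI)
    fix w :: real assume w: "w > 0" and hyp: "\<forall>j::nat. \<bar>(real j)^2 - w^2\<bar> \<ge> c * pi * w"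
    have hyp': "\<And>j::nat. \<bar>(real j)^2 - w^2\<bar> \<ge> a * w" using hyp unfolding a_def by auto
    have "a * w \<le> w^2" using hyp'[of 0] by simp
    then have wa: "w \<ge> a" using w by (simp add: power2_eq_square)
    define j where "j = nat \<lfloor>w\<rfloor>"
    have rj: "real j = of_int \<lfloor>w\<rfloor>" unfolding j_def using w by simp
    define t where "t = w - real j"
    have t01: "0 \<le> t" "t < 1" unfolding t_def rj by linarith+
    have j0: "real j \<ge> 0" by simp
    have t1: "t \<ge> \<delta>"
    proof -
      have "w^2 - (real j)^2 = t * (w + real j)" unfolding t_def by (simp add: power2_eq_square algebra_simps)
      moreover have "\<bar>(real j)^2 - w^2\<bar> = w^2 - (real j)^2" using t01 unfolding t_def
        by (simp add: abs_if power2_eq_square) (smt (verit) j0 mult_mono)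
      ultimately have "a * w \<le> t * (w + real j)" using hyp'[of j] by simp
      also have "\<dots> \<le> t * (2 * w)" using t01 unfolding t_def by (intro mult_left_mono) auto
      finally have "a \<le> 2 * t" using w by (simp add: mult.commute mult.left_commute)
      then show ?thesis unfolding \<delta>_def by simp
    qed
    have t2: "1 - t \<ge> \<delta>"
    proof -
      define u where "u = 1 - t"
      have u: "u > 0" using t01 unfolding u_def by simp
      have "(real (Suc j))^2 - w^2 = u * (real j + 1 + w)" unfolding u_def t_def by (simp add: power2_eq_square algebra_simps)
      moreover have "real (Suc j) > w" using t01 unfolding t_def by simp
      moreover have "u * (real j + 1 + w) > 0" using u w by (intro mult_pos_pos) auto
      ultimately have "\<bar>(real (Suc j))^2 - w^2\<bar> = u * (real j + 1 + w)"
        by simp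
      then have "a * w \<le> u * (real j + 1 + w)" using hyp'[of "Suc j"] by simp
      also have "\<dots> \<le> u * (2 * w + 1)" using t01 u unfolding t_def by (intro mult_left_mono) auto
      finally have h: "a * w \<le> u * (2 * w + 1)" .
      have "a * a \<le> u * (2 * a + 1)"
      proof (cases "2 * u \<ge> a")
        case True
        then have "a * a \<le> 2 * u * a" using a by (simp add: mult_right_mono)
        also have "\<dots> \<le> u * (2 * a + 1)" using u by (simp add: algebra_simps)
        finally show ?thesis .
      next
        case False
        have "(w - a) * (a - 2 * u) \<ge> 0" using False wa by simp
        then show ?thesis using h by (simp add: algebra_simps)
      qed
      then have "a * a / (2 * a + 1) \<le> u" using a by (simp add: divide_le_eq mult.commute)
      then show ?thesis unfolding \<delta>_def u_def by simp
    qed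
    have "cos (w * (2*pi)) = cos (t * (2*pi))"
    proof -
      have "w * (2*pi) = t * (2*pi) + real j * (2 * pi)" unfolding t_def by (simp add: algebra_simps)
      then show ?thesis using cos.periodic_simps(1)[of "t * (2*pi)" j] by simp
    qed
    then show "2 - 2 * cos (w * (2*pi)) \<ge> \<beta>" using bb t1 t2 by simp
  qed
qed



lemma cramer:
  fixes c s w r1 r2 :: real
  assumes w: "w \<noteq> 0" and Q: "(c - 1)^2 + s^2 \<noteq> 0"
  defines "D \<equiv> w * ((c - 1)^2 + s^2)"
  shows "(r1 * w * (c - 1) - s * r2) / D * (c - 1) + ((c - 1) * r2 + w * s * r1) / D * s = r1
       \<and> - w * s * ((r1 * w * (c - 1) - s * r2) / D) + w * (c - 1) * (((c - 1) * r2 + w * s * r1) / D) = r2"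
proof -
  have D: "D \<noteq> 0" unfolding D_def using w Q by simp
  have "(r1 * w * (c - 1) - s * r2) / D * (c - 1) + ((c - 1) * r2 + w * s * r1) / D * s
      = ((r1 * w * (c - 1) - s * r2) * (c - 1) + ((c - 1) * r2 + w * s * r1) * s) / D"
    using D by (simp add: field_simps)
  also have "(r1 * w * (c - 1) - s * r2) * (c - 1) + ((c - 1) * r2 + w * s * r1) * s = r1 * D"
    unfolding D_def by (simp add: algebra_simps power2_eq_square)
  finally have 1: "(r1 * w * (c - 1) - s * r2) / D * (c - 1) + ((c - 1) * r2 + w * s * r1) / D * s = r1"
    using D by simp
  have "- w * s * ((r1 * w * (c - 1) - s * r2) / D) + w * (c - 1) * (((c - 1) * r2 + w * s * r1) / D)
     = (- w * s * (r1 * w * (c - 1) - s * r2) + w * (c - 1) * ((c - 1) * r2 + w * s * r1)) / D"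
    using D by (simp add: field_simps)
  also have "- w * s * (r1 * w * (c - 1) - s * r2) + w * (c - 1) * ((c - 1) * r2 + w * s * r1) = r2 * D"
    unfolding D_def by (simp add: algebra_simps power2_eq_square)
  finally have 2: "- w * s * ((r1 * w * (c - 1) - s * r2) / D) + w * (c - 1) * (((c - 1) * r2 + w * s * r1) / D) = r2"
    using D by simp
  show ?thesis using 1 2 by simp
qed

lemma abs3: fixes a b q :: real shows "\<bar>a + b + q\<bar> \<le> \<bar>a\<bar> + \<bar>b\<bar> + \<bar>q\<bar>"
  using abs_triangle_ineq[of a b] abs_triangle_ineq[of "a+b" q] by linarith

lemma abs_mult_le: fixes x y X Y :: real shows "\<bar>x\<bar> \<le> X \<Longrightarrow> \<bar>y\<bar> \<le> Y \<Longrightarrow> \<bar>x * y\<bar> \<le> X * Y"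
  by (simp add: abs_mult mult_mono')

lemma EX:
  fixes d :: "real \<Rightarrow> real" and w \<beta> :: real
  assumes d: "d absolutely_integrable_on {0..2*pi}" and w: "w > 0" and bpos: "\<beta> > 0"
    and Qb: "2 - 2 * cos (w * (2*pi)) \<ge> \<beta>"
  shows "\<exists>e e1. continuous_on {0..2*pi} e \<and> continuous_on {0..2*pi} e1 \<and>
    (\<forall>x\<in>{0..2*pi}. e x = e 0 + integral {0..x} e1 \<and> e1 x = e1 0 + integral {0..x} (\<lambda>t. w^2/4 * d t - w^2 * e t)) \<and>
    e 0 = e (2*pi) \<and> e1 0 = e1 (2*pi) \<and>
    (\<forall>x\<in>{0..2*pi}. \<bar>e x\<bar> \<le> w * integral {0..2*pi} (\<lambda>x. \<bar>d x\<bar>) * (3/\<beta> + 1/2)) \<and>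
    (\<forall>x\<in>{0..2*pi}. \<bar>e1 x\<bar> \<le> w^2 * integral {0..2*pi} (\<lambda>x. \<bar>d x\<bar>) * (3/\<beta> + 1/2))"
proof -
  let ?I = "{0..2*pi}"
  define M where "M = integral ?I (\<lambda>x. \<bar>d x\<bar>)"
  define f where "f = (\<lambda>t. w^2/4 * d t)"
  define S where "S = (\<lambda>x. integral {0..x} (\<lambda>t. cos (w * t) * f t))"
  define Cc where "Cc = (\<lambda>x. integral {0..x} (\<lambda>t. sin (w * t) * f t))"
  define \<sigma> where "\<sigma> = w^2/4 * M"
  have ad: "(\<lambda>x. \<bar>d x\<bar>) integrable_on ?I" using d unfolding absolutely_integrable_on_def by auto
  have M0: "M \<ge> 0" unfolding M_def by (rule integral_nonneg[OF ad]) auto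
  have fa: "f absolutely_integrable_on ?I" unfolding f_def using d by simp
  have ca: "(\<lambda>t. cos (w * t) * f t) absolutely_integrable_on ?I"
    by (rule abs_int_cont_mult[OF _ fa]) (intro continuous_intros)
  have sa: "(\<lambda>t. sin (w * t) * f t) absolutely_integrable_on ?I"
    by (rule abs_int_cont_mult[OF _ fa]) (intro continuous_intros)
  have Sc: "continuous_on ?I S" unfolding S_def by (rule indefinite_integral_continuous_1, rule abs_int_imp_int[OF ca])
  have Ccc: "continuous_on ?I Cc" unfolding Cc_def by (rule indefinite_integral_continuous_1, rule abs_int_imp_int[OF sa])
  have bnd: "\<bar>integral {0..x} (\<lambda>t. phi t * f t)\<bar> \<le> \<sigma>"
    if x: "x \<in> ?I" and pa: "(\<lambda>t. phi t * f t) absolutely_integrable_on ?I" and pb: "\<And>t. \<bar>phi t\<bar> \<le> 1" for x phi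
  proof -
    have sub: "{0..x} \<subseteq> ?I" using x by auto
    have "norm (integral {0..x} (\<lambda>t. phi t * f t)) \<le> integral {0..x} (\<lambda>t. w^2/4 * \<bar>d t\<bar>)"
    proof (rule integral_norm_bound_integral)
      show "(\<lambda>t. phi t * f t) integrable_on {0..x}"
        using integrable_on_subinterval[OF abs_int_imp_int[OF pa] sub] .
      show "(\<lambda>t. w^2/4 * \<bar>d t\<bar>) integrable_on {0..x}"
        using integrable_on_subinterval[OF ad sub] by (rule integrable_on_mult_right)
      fix t
      have "\<bar>phi t * f t\<bar> \<le> 1 * \<bar>f t\<bar>" unfolding abs_mult by (rule mult_right_mono[OF pb]) simp
      then show "norm (phi t * f t) \<le> w^2/4 * \<bar>d t\<bar>" unfolding f_def by (simp add: abs_mult)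
    qed
    also have "\<dots> \<le> integral ?I (\<lambda>t. w^2/4 * \<bar>d t\<bar>)"
      by (rule integral_subset_le[OF sub]) (use integrable_on_subinterval[OF ad sub] ad in \<open>auto intro: integrable_on_mult_right\<close>)
    also have "\<dots> = \<sigma>" unfolding \<sigma>_def M_def by simp
    finally show ?thesis by simp
  qed
  have Sb: "\<And>x. x \<in> ?I \<Longrightarrow> \<bar>S x\<bar> \<le> \<sigma>" unfolding S_def by (rule bnd[OF _ ca]) auto
  have Cb: "\<And>x. x \<in> ?I \<Longrightarrow> \<bar>Cc x\<bar> \<le> \<sigma>" unfolding Cc_def by (rule bnd[OF _ sa]) auto
  define c where "c = cos (w * (2*pi))"
  define s where "s = sin (w * (2*pi))"
  have Qeq: "(c - 1)^2 + s^2 = 2 - 2 * c" unfolding c_def s_def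
    using sin_cos_squared_add[of "w * (2*pi)"] by (simp add: power2_eq_square algebra_simps)
  have Qpos: "(c - 1)^2 + s^2 \<ge> \<beta>" using Qb Qeq unfolding c_def by simp
  have Qnz: "(c - 1)^2 + s^2 \<noteq> 0" using Qpos bpos by linarith
  define D where "D = w * ((c - 1)^2 + s^2)"
  have Dpos: "D \<ge> w * \<beta>" unfolding D_def using Qpos w by simp
  have wb: "w * \<beta> > 0" using w bpos by simp
  define Ss where "Ss = S (2*pi)"
  define Cs where "Cs = Cc (2*pi)"
  define r1 where "r1 = - (s * Ss - c * Cs) / w"
  define r2 where "r2 = - (c * Ss + s * Cs)"
  define A where "A = (r1 * w * (c - 1) - s * r2) / D"
  define B where "B = ((c - 1) * r2 + w * s * r1) / D"
  have cr: "A * (c - 1) + B * s = r1 \<and> - w * s * A + w * (c - 1) * B = r2"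
    unfolding A_def B_def D_def using cramer[OF _ Qnz, of w r1 r2] w by simp
  define e where "e = (\<lambda>x. A * cos (w * x) + B * sin (w * x) + (sin (w * x) * S x - cos (w * x) * Cc x) / w)"
  define e1 where "e1 = (\<lambda>x. w * (B * cos (w * x) - A * sin (w * x)) + cos (w * x) * S x + sin (w * x) * Cc x)"
  have eqs: "\<forall>x\<in>?I. e x = e 0 + integral {0..x} e1 \<and> e1 x = e1 0 + integral {0..x} (\<lambda>t. w^2/4 * d t - w^2 * e t)"
  proof
    fix x assume x: "x \<in> ?I"
    show "e x = e 0 + integral {0..x} e1 \<and> e1 x = e1 0 + integral {0..x} (\<lambda>t. w^2/4 * d t - w^2 * e t)"
      unfolding e_def e1_def S_def Cc_def f_def by (rule EX1[OF d w x])
  qed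
  have S0: "S 0 = 0" "Cc 0 = 0" unfolding S_def Cc_def by auto
  have p0: "e 0 = e (2*pi)"
  proof -
    have "e (2*pi) - e 0 = A * (c - 1) + B * s + (s * Ss - c * Cs) / w"
      unfolding e_def c_def s_def Ss_def Cs_def using S0 by (simp add: algebra_simps)
    also have "\<dots> = 0" using cr w unfolding r1_def by (simp add: field_simps)
    finally show ?thesis by simp
  qed
  have p1: "e1 0 = e1 (2*pi)"
  proof -
    have "e1 (2*pi) - e1 0 = - w * s * A + w * (c - 1) * B + (c * Ss + s * Cs)"
      unfolding e1_def c_def s_def Ss_def Cs_def using S0 by (simp add: algebra_simps)
    also have "\<dots> = 0" using cr unfolding r2_def by simp
    finally show ?thesis by simp
  qed
  have cb: "\<bar>c - 1\<bar> \<le> 2" unfolding c_def using abs_cos_le_one[of "w * (2*pi)"] by linarith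
  have sb: "\<bar>s\<bar> \<le> 1" unfolding s_def by simp
  have cb1: "\<bar>c\<bar> \<le> 1" unfolding c_def by simp
  have Ssb: "\<bar>Ss\<bar> \<le> \<sigma>" "\<bar>Cs\<bar> \<le> \<sigma>" unfolding Ss_def Cs_def using Sb Cb by auto
  have s0: "\<sigma> \<ge> 0" unfolding \<sigma>_def using M0 by simp
  have r1b: "\<bar>r1\<bar> \<le> 2 * \<sigma> / w"
  proof -
    have "\<bar>s * Ss - c * Cs\<bar> \<le> \<bar>s * Ss\<bar> + \<bar>c * Cs\<bar>" by (rule abs_triangle_ineq4)
    also have "\<dots> \<le> 1 * \<sigma> + 1 * \<sigma>" by (intro add_mono abs_mult_le sb cb1 Ssb)
    finally show ?thesis unfolding r1_def using w by (simp add: abs_minus_commute divide_right_mono)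
  qed
  have r2b: "\<bar>r2\<bar> \<le> 2 * \<sigma>"
  proof -
    have "\<bar>c * Ss + s * Cs\<bar> \<le> \<bar>c * Ss\<bar> + \<bar>s * Cs\<bar>" by (rule abs_triangle_ineq)
    also have "\<dots> \<le> 1 * \<sigma> + 1 * \<sigma>" by (intro add_mono abs_mult_le sb cb1 Ssb)
    finally show ?thesis unfolding r2_def by simp
  qed
  have numA: "\<bar>r1 * w * (c - 1) - s * r2\<bar> \<le> 6 * \<sigma>"
  proof -
    have "\<bar>r1 * w * (c - 1) - s * r2\<bar> \<le> \<bar>r1 * w * (c - 1)\<bar> + \<bar>s * r2\<bar>" by (rule abs_triangle_ineq4)
    also have "\<dots> \<le> (2 * \<sigma> / w * w) * 2 + 1 * (2 * \<sigma>)"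
      by (intro add_mono abs_mult_le sb cb r2b r1b order_refl) (use w in simp)
    also have "\<dots> = 6 * \<sigma>" using w by simp
    finally show ?thesis .
  qed
  have numB: "\<bar>(c - 1) * r2 + w * s * r1\<bar> \<le> 6 * \<sigma>"
  proof -
    have "\<bar>(c - 1) * r2 + w * s * r1\<bar> \<le> \<bar>(c - 1) * r2\<bar> + \<bar>w * s * r1\<bar>" by (rule abs_triangle_ineq)
    also have "\<dots> \<le> 2 * (2 * \<sigma>) + (w * 1) * (2 * \<sigma> / w)"
      by (intro add_mono abs_mult_le sb cb r2b r1b order_refl) (use w in simp)
    also have "\<dots> = 6 * \<sigma>" using w by simp
    finally show ?thesis .
  qed
  have Ab: "\<bar>A\<bar> \<le> 6 * \<sigma> / (w * \<beta>)"
  proof -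
    have "\<bar>A\<bar> = \<bar>r1 * w * (c - 1) - s * r2\<bar> / D" unfolding A_def using Dpos wb by simp
    also have "\<dots> \<le> 6 * \<sigma> / D" using Dpos wb numA by (simp add: divide_right_mono)
    also have "\<dots> \<le> 6 * \<sigma> / (w * \<beta>)" using Dpos wb s0 by (intro divide_left_mono) auto
    finally show ?thesis .
  qed
  have Bb: "\<bar>B\<bar> \<le> 6 * \<sigma> / (w * \<beta>)"
  proof -
    have "\<bar>B\<bar> = \<bar>(c - 1) * r2 + w * s * r1\<bar> / D" unfolding B_def using Dpos wb by simp
    also have "\<dots> \<le> 6 * \<sigma> / D" using Dpos wb numB by (simp add: divide_right_mono)
    also have "\<dots> \<le> 6 * \<sigma> / (w * \<beta>)" using Dpos wb s0 by (intro divide_left_mono) auto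
    finally show ?thesis .
  qed
  have key: "6 * \<sigma> / (w * \<beta>) + 6 * \<sigma> / (w * \<beta>) + 2 * \<sigma> / w = w * M * (3/\<beta> + 1/2)"
    unfolding \<sigma>_def using w bpos by (simp add: field_simps power2_eq_square)
  have eb: "\<forall>x\<in>?I. \<bar>e x\<bar> \<le> w * M * (3/\<beta> + 1/2)"
  proof
    fix x assume x: "x \<in> ?I"
    have "\<bar>e x\<bar> \<le> \<bar>A * cos (w * x)\<bar> + \<bar>B * sin (w * x)\<bar> + (\<bar>sin (w * x) * S x\<bar> + \<bar>cos (w * x) * Cc x\<bar>) / w"
    proof -
      have "\<bar>(sin (w * x) * S x - cos (w * x) * Cc x) / w\<bar> \<le> (\<bar>sin (w * x) * S x\<bar> + \<bar>cos (w * x) * Cc x\<bar>) / w"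
        using w by (simp add: divide_right_mono abs_triangle_ineq4)
      then show ?thesis unfolding e_def using abs3[of "A * cos (w * x)" "B * sin (w * x)" "(sin (w * x) * S x - cos (w * x) * Cc x) / w"] by linarith
    qed
    also have "\<dots> \<le> 6 * \<sigma> / (w * \<beta>) * 1 + 6 * \<sigma> / (w * \<beta>) * 1 + (1 * \<sigma> + 1 * \<sigma>) / w"
      by (intro add_mono divide_right_mono abs_mult_le Ab Bb Sb Cb x abs_sin_le_one abs_cos_le_one) (use w in auto)
    also have "\<dots> = w * M * (3/\<beta> + 1/2)" using key by simp
    finally show "\<bar>e x\<bar> \<le> w * M * (3/\<beta> + 1/2)" .
  qed
  have e1b: "\<forall>x\<in>?I. \<bar>e1 x\<bar> \<le> w^2 * M * (3/\<beta> + 1/2)"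
  proof
    fix x assume x: "x \<in> ?I"
    have "\<bar>e1 x\<bar> \<le> w * (\<bar>B * cos (w * x)\<bar> + \<bar>A * sin (w * x)\<bar>) + \<bar>cos (w * x) * S x\<bar> + \<bar>sin (w * x) * Cc x\<bar>"
    proof -
      have "\<bar>w * (B * cos (w * x) - A * sin (w * x))\<bar> \<le> w * (\<bar>B * cos (w * x)\<bar> + \<bar>A * sin (w * x)\<bar>)"
      proof -
        have "\<bar>B * cos (w * x) - A * sin (w * x)\<bar> \<le> \<bar>B * cos (w * x)\<bar> + \<bar>A * sin (w * x)\<bar>" by (rule abs_triangle_ineq4)
        then show ?thesis using w by (simp add: abs_mult[of w] mult_left_mono del: abs_mult)
      qed
      then show ?thesis unfolding e1_def using abs3[of "w * (B * cos (w * x) - A * sin (w * x))" "cos (w * x) * S x" "sin (w * x) * Cc x"] by linarith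
    qed
    also have "\<dots> \<le> w * (6 * \<sigma> / (w * \<beta>) * 1 + 6 * \<sigma> / (w * \<beta>) * 1) + 1 * \<sigma> + 1 * \<sigma>"
      by (intro add_mono mult_left_mono abs_mult_le Ab Bb Sb Cb x abs_sin_le_one abs_cos_le_one) (use w in auto)
    also have "\<dots> = w * (6 * \<sigma> / (w * \<beta>) + 6 * \<sigma> / (w * \<beta>) + 2 * \<sigma> / w)" using w by (simp add: field_simps)
    also have "\<dots> = w^2 * M * (3/\<beta> + 1/2)" unfolding key by (simp add: power2_eq_square)
    finally show "\<bar>e1 x\<bar> \<le> w^2 * M * (3/\<beta> + 1/2)" .
  qed
  have ec: "continuous_on ?I e" unfolding e_def using w by (intro continuous_intros Sc Ccc) auto
  have e1c: "continuous_on ?I e1" unfolding e1_def by (intro continuous_intros Sc Ccc)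
  show ?thesis
    using ec e1c eqs p0 p1 eb e1b unfolding M_def by blast
qed



theorem proposition8p2:
  fixes c :: real
  assumes "c > 0"
  shows "\<exists>C::real. \<forall>eps l (d :: real \<Rightarrow> real).
    eps > 0 \<longrightarrow> l > 0 \<longrightarrow>
    (\<forall>j::nat. \<bar>(real j)^2 * eps^2 / l^2 - lambda_star\<bar> \<ge> c * eps / l) \<longrightarrow>
    L2_on d \<longrightarrow>
    (\<exists>e e1 e2. periodic_sol eps l d e e1 e2 \<and>
       (\<forall>f f1 f2. periodic_sol eps l d f f1 f2 \<longrightarrow> (\<forall>x\<in>{0..2*pi}. f x = e x)) \<and>
       Linf_norm_sq e + eps^2 / l^2 * L2_norm_sq e1 + eps^4 / l^4 * L2_norm_sq e2
         \<le> C * (l^2 / eps^2) * L2_norm_sq d)"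
proof -
  have c: "c > 0" using assms .
  obtain \<beta> where bpos: "\<beta> > 0" and bb: "\<forall>w>0. (\<forall>j::nat. \<bar>(real j)^2 - w^2\<bar> \<ge> c * pi * w) \<longrightarrow> 2 - 2 * cos (w * (2*pi)) \<ge> \<beta>"
    using beta_exists[OF c] by blast
  define \<kappa> where "\<kappa> = 3/\<beta> + 1/2"
  have kpos: "\<kappa> > 0" unfolding \<kappa>_def using bpos by (intro add_pos_pos divide_pos_pos) auto
  show ?thesis
  proof (intro exI[of _ "20 * \<kappa>^2 + 1 / c^2"] allI impI)
    fix eps l :: real and d :: "real \<Rightarrow> real"
    assume eps: "eps > 0" and l: "l > 0"
      and hyp: "\<forall>j::nat. \<bar>(real j)^2 * eps^2 / l^2 - lambda_star\<bar> \<ge> c * eps / l"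
      and dL2: "L2_on d"
    let ?I = "{0..2*pi}"
    define w where "w = l / (pi * eps)"
    have w: "w > 0" unfolding w_def using eps l by simp
    have k1: "eps / l = 1 / (pi * w)" unfolding w_def using eps l by simp
    have hyp': "\<forall>j::nat. \<bar>(real j)^2 - w^2\<bar> \<ge> c * pi * w"
    proof
      fix j :: nat
      have "(real j)^2 * eps^2 / l^2 - lambda_star = ((real j)^2 - w^2) / (pi^2 * w^2)"
        unfolding lambda_star_def lambda0_def w_def using eps l by (simp add: field_simps power2_eq_square)
      moreover have "c * eps / l = c / (pi * w)" unfolding w_def using eps l by (simp add: field_simps)
      ultimately have h: "\<bar>((real j)^2 - w^2) / (pi^2 * w^2)\<bar> \<ge> c / (pi * w)" using hyp by metis
      have pw: "pi^2 * w^2 > 0" using w by simp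
      have "c * pi * w = c / (pi * w) * (pi^2 * w^2)" using w by (simp add: field_simps power2_eq_square)
      also have "\<dots> \<le> \<bar>((real j)^2 - w^2) / (pi^2 * w^2)\<bar> * (pi^2 * w^2)"
        using h pw by (intro mult_right_mono) auto
      also have "\<dots> = \<bar>(real j)^2 - w^2\<bar>" using pw w by (simp add: abs_divide)
      finally show "\<bar>(real j)^2 - w^2\<bar> \<ge> c * pi * w" .
    qed
    have Qb: "2 - 2 * cos (w * (2*pi)) \<ge> \<beta>" using bb w hyp' by blast
    have cw: "cos (w * (2*pi)) \<noteq> 1" using Qb bpos by auto
    have wc: "w \<ge> c * pi"
    proof -
      have "c * pi * w \<le> w^2" using hyp'[rule_format, of 0] by simp
      then show ?thesis using w by (simp add: power2_eq_square)
    qed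
    have da: "d absolutely_integrable_on ?I" by (rule L2_abs[OF dL2])
    have di: "d integrable_on ?I" using abs_int_imp_int[OF da] .
    define M where "M = integral ?I (\<lambda>x. \<bar>d x\<bar>)"
    define N where "N = integral ?I (\<lambda>x. (d x)^2)"
    have d2: "(\<lambda>x. (d x)^2) integrable_on ?I" using dL2 unfolding L2_on_def by simp
    have N0: "N \<ge> 0" unfolding N_def by (rule integral_nonneg[OF d2]) auto
    have MN: "M^2 \<le> 2 * pi * N" unfolding M_def N_def using CS[of 0 "2*pi" d] da d2 by simp
    obtain e e1 where ec: "continuous_on ?I e" and e1c: "continuous_on ?I e1"
      and eqs: "\<forall>x\<in>?I. e x = e 0 + integral {0..x} e1 \<and> e1 x = e1 0 + integral {0..x} (\<lambda>t. w^2/4 * d t - w^2 * e t)"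
      and p0: "e 0 = e (2*pi)" and p1: "e1 0 = e1 (2*pi)"
      and eb: "\<forall>x\<in>?I. \<bar>e x\<bar> \<le> w * M * \<kappa>"
      and e1b: "\<forall>x\<in>?I. \<bar>e1 x\<bar> \<le> w^2 * M * \<kappa>"
      using EX[OF da w bpos Qb] unfolding M_def \<kappa>_def by blast
    define e2 where "e2 = (\<lambda>t. w^2/4 * d t - w^2 * e t)"
    define Einf where "Einf = w * M * \<kappa>"
    have M0: "M \<ge> 0" unfolding M_def by (rule integral_nonneg) (use da in \<open>auto simp: absolutely_integrable_on_def\<close>)
    have Einf0: "Einf \<ge> 0" unfolding Einf_def using w M0 kpos by simp
    have Zeq: "eps^2 * (4 * pi^2 / l^2) = 4 / w^2"
      unfolding w_def using eps l by (simp add: field_simps power2_eq_square)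
    have emeas: "e measurable_on ?I"
      using continuous_imp_measurable_on_sets_lebesgue[OF ec] by (simp add: measurable_on_iff_borel_measurable)
    have dmeas: "d measurable_on ?I" using dL2 unfolding L2_on_def by simp
    have e2meas: "e2 measurable_on ?I" unfolding e2_def
      by (intro measurable_on_diff measurable_on_cmul emeas dmeas)
    have e2bor: "e2 \<in> borel_measurable (lebesgue_on ?I)" using e2meas by (simp add: measurable_on_iff_borel_measurable)
    have e2sq_le: "(e2 x)^2 \<le> 2 * (w^2/4)^2 * (d x)^2 + 2 * (w^2 * Einf)^2" if x: "x \<in> ?I" for x
    proof -
      have "(e2 x)^2 \<le> 2 * (w^2/4 * d x)^2 + 2 * (w^2 * e x)^2"
      proof -
        have "0 \<le> (w^2/4 * d x + w^2 * e x)^2" by simp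
        then show ?thesis unfolding e2_def by (simp add: power2_eq_square algebra_simps)
      qed
      also have "(w^2 * e x)^2 \<le> (w^2 * Einf)^2"
      proof -
        have "\<bar>w^2 * e x\<bar> \<le> w^2 * Einf" using eb x unfolding Einf_def by (simp add: abs_mult mult_left_mono)
        then show ?thesis using abs_le_square_iff by (metis abs_of_nonneg Einf0 w mult_nonneg_nonneg zero_le_power2 power2_abs)
      qed
      finally have h: "(e2 x)^2 \<le> 2 * (w^2/4 * d x)^2 + 2 * (w^2 * Einf)^2" by simp
      have eqsq: "(w^2/4 * d x)^2 = (w^2/4)^2 * (d x)^2" by (rule power_mult_distrib)
      show ?thesis using h unfolding eqsq by simp
    qed
    have bndint: "(\<lambda>x. 2 * (w^2/4)^2 * (d x)^2 + 2 * (w^2 * Einf)^2) integrable_on ?I"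
      by (intro integrable_add integrable_on_mult_right d2 integrable_const_ivl)
    have e2sq: "(\<lambda>x. (e2 x)^2) integrable_on ?I"
    proof (rule measurable_bounded_by_integrable_imp_integrable[OF _ bndint])
      show "(\<lambda>x. (e2 x)^2) \<in> borel_measurable (lebesgue_on ?I)" using e2bor by (rule borel_measurable_power)
      fix x assume "x \<in> ?I"
      then show "norm ((e2 x)^2) \<le> 2 * (w^2/4)^2 * (d x)^2 + 2 * (w^2 * Einf)^2" using e2sq_le by simp
    qed simp
    have L2e2: "L2_on e2" unfolding L2_on_def using e2meas e2sq by simp
    have ps: "periodic_sol eps l d e e1 e2"
      unfolding periodic_sol_def H2_derivs_def
    proof (intro conjI L2e2 ballI AE_I2 impI)
      fix x assume "x \<in> ?I"
      then show "e1 x = e1 0 + integral {0..x} e2" "e x = e 0 + integral {0..x} e1"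
        using eqs unfolding e2_def by blast+
    next
      fix x
      show "eps^2 * (4 * pi^2 / l^2) * e2 x + lambda0 * e x = d x"
        unfolding Zeq e2_def lambda0_def using w by (simp add: field_simps)
    qed (use p0 p1 in auto)
    have uniq: "\<forall>f f1 f2. periodic_sol eps l d f f1 f2 \<longrightarrow> (\<forall>x\<in>?I. f x = e x)"
    proof (intro allI impI)
      fix f f1 f2 assume psf: "periodic_sol eps l d f f1 f2"
      have sf: "continuous_on ?I f \<and> continuous_on ?I f1 \<and>
        (\<forall>x\<in>?I. f1 x = f1 0 + integral {0..x} (\<lambda>t. w^2/4 * d t - w^2 * f t)) \<and>
        (\<forall>x\<in>?I. f x = f 0 + integral {0..x} f1) \<and> f 0 = f (2*pi) \<and> f1 0 = f1 (2*pi)"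
        using SOLN[OF psf eps l da] unfolding w_def by blast
      have fc: "continuous_on ?I f" and f1c: "continuous_on ?I f1" using sf by blast+
      have gc: "continuous_on ?I (\<lambda>x. f x - e x)" by (intro continuous_intros fc ec)
      have g1c: "continuous_on ?I (\<lambda>x. f1 x - e1 x)" by (intro continuous_intros f1c e1c)
      have G1: "f1 x - e1 x = (f1 0 - e1 0) + integral {0..x} (\<lambda>t. - (w^2 * (f t - e t)))" if x: "x \<in> ?I" for x
      proof -
        have sub: "{0..x} \<subseteq> ?I" using x by auto
        have i1: "(\<lambda>t. w^2/4 * d t - w^2 * f t) integrable_on {0..x}"
          by (intro integrable_diff integrable_on_mult_right integrable_on_subinterval[OF di sub]
              integrable_continuous_interval continuous_on_subset[OF fc sub])
        have i2: "(\<lambda>t. w^2/4 * d t - w^2 * e t) integrable_on {0..x}"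
          by (intro integrable_diff integrable_on_mult_right integrable_on_subinterval[OF di sub]
              integrable_continuous_interval continuous_on_subset[OF ec sub])
        have "integral {0..x} (\<lambda>t. w^2/4 * d t - w^2 * f t) - integral {0..x} (\<lambda>t. w^2/4 * d t - w^2 * e t)
            = integral {0..x} (\<lambda>t. (w^2/4 * d t - w^2 * f t) - (w^2/4 * d t - w^2 * e t))"
          using integral_diff[OF i1 i2] by simp
        also have "\<dots> = integral {0..x} (\<lambda>t. - (w^2 * (f t - e t)))" by (simp add: algebra_simps)
        finally have "integral {0..x} (\<lambda>t. w^2/4 * d t - w^2 * f t) - integral {0..x} (\<lambda>t. w^2/4 * d t - w^2 * e t) = integral {0..x} (\<lambda>t. - (w^2 * (f t - e t)))" .
        moreover have "f1 x = f1 0 + integral {0..x} (\<lambda>t. w^2/4 * d t - w^2 * f t)" using sf x by blast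
        moreover have "e1 x = e1 0 + integral {0..x} (\<lambda>t. w^2/4 * d t - w^2 * e t)" using eqs x by blast
        ultimately show ?thesis by linarith
      qed
      have G0: "f x - e x = (f 0 - e 0) + integral {0..x} (\<lambda>t. f1 t - e1 t)" if x: "x \<in> ?I" for x
      proof -
        have sub: "{0..x} \<subseteq> ?I" using x by auto
        have "integral {0..x} (\<lambda>t. f1 t - e1 t) = integral {0..x} f1 - integral {0..x} e1"
          by (intro integral_diff integrable_continuous_interval continuous_on_subset[OF f1c sub] continuous_on_subset[OF e1c sub])
        moreover have "f x = f 0 + integral {0..x} f1" using sf x by blast
        moreover have "e x = e 0 + integral {0..x} e1" using eqs x by blast
        ultimately show ?thesis by linarith
      qed
      have "\<forall>x\<in>?I. (\<lambda>x. f x - e x) x = 0"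
      proof (rule UNIQ[OF w cw gc g1c])
        fix x assume x: "x \<in> ?I"
        show "f1 x - e1 x = (f1 0 - e1 0) + integral {0..x} (\<lambda>t. - (w^2 * (f t - e t)))"
          by (rule G1[OF x])
        show "f x - e x = (f 0 - e 0) + integral {0..x} (\<lambda>t. f1 t - e1 t)"
          by (rule G0[OF x])
      next
        have pf: "f 0 = f (2*pi)" "f1 0 = f1 (2*pi)" using sf by blast+
        show "f (2*pi) - e (2*pi) = f 0 - e 0" "f1 (2*pi) - e1 (2*pi) = f1 0 - e1 0" using pf p0 p1 by simp_all
      qed
      then show "\<forall>x\<in>?I. f x = e x" by auto
    qed
    have Linf: "Linf_norm_sq e \<le> Einf^2"
    proof -
      have ne: "?I \<noteq> {}" by simp
      have le: "(SUP x\<in>?I. \<bar>e x\<bar>) \<le> Einf" using eb unfolding Einf_def by (intro cSUP_least ne) auto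
      have bdd: "bdd_above ((\<lambda>x. \<bar>e x\<bar>) ` ?I)" using eb by (intro bdd_aboveI2) auto
      have ge: "0 \<le> (SUP x\<in>?I. \<bar>e x\<bar>)"
        using cSUP_upper[OF _ bdd, of 0] by (meson abs_ge_zero atLeastAtMost_iff order_trans pi_ge_zero mult_nonneg_nonneg zero_le_numeral order_refl)
      show ?thesis unfolding Linf_norm_sq_def using le ge by (intro power_mono) auto
    qed
    have L2e1: "L2_norm_sq e1 \<le> 2 * pi * (w * Einf)^2"
    proof -
      have "integral ?I (\<lambda>x. (e1 x)^2) \<le> integral ?I (\<lambda>x. (w * Einf)^2)"
      proof (rule integral_le)
        show "(\<lambda>x. (e1 x)^2) integrable_on ?I" by (intro integrable_continuous_interval continuous_intros e1c)
        show "(\<lambda>x. (w * Einf)^2) integrable_on ?I" by (rule integrable_const_ivl)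
        fix x assume x: "x \<in> ?I"
        have "\<bar>e1 x\<bar> \<le> w * Einf" using e1b x unfolding Einf_def by (simp add: power2_eq_square mult.assoc)
        then show "(e1 x)^2 \<le> (w * Einf)^2"
          by (metis abs_ge_zero power2_abs power_mono)
      qed
      then show ?thesis unfolding L2_norm_sq_def by (simp add: content_real)
    qed
    have L2e2n: "L2_norm_sq e2 \<le> 2 * (w^2/4)^2 * N + 2 * pi * (2 * (w^2 * Einf)^2)"
    proof -
      have "integral ?I (\<lambda>x. (e2 x)^2) \<le> integral ?I (\<lambda>x. 2 * (w^2/4)^2 * (d x)^2 + 2 * (w^2 * Einf)^2)"
        by (rule integral_le[OF e2sq bndint]) (use e2sq_le in auto)
      also have "\<dots> = 2 * (w^2/4)^2 * N + 2 * pi * (2 * (w^2 * Einf)^2)"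
      proof -
        have "integral ?I (\<lambda>x. 2 * (w^2/4)^2 * (d x)^2 + 2 * (w^2 * Einf)^2)
          = integral ?I (\<lambda>x. 2 * (w^2/4)^2 * (d x)^2) + integral ?I (\<lambda>x. 2 * (w^2 * Einf)^2)"
          by (rule integral_add) (intro integrable_on_mult_right d2, rule integrable_const_ivl)
        then show ?thesis unfolding N_def by (simp add: content_real)
      qed
      finally show ?thesis unfolding L2_norm_sq_def .
    qed
    have k2: "eps^2 / l^2 = 1 / (pi^2 * w^2)" unfolding w_def using eps l by (simp add: field_simps power2_eq_square)
    have k4: "eps^4 / l^4 = 1 / (pi^4 * w^4)" unfolding w_def using eps l by (simp add: field_simps power_mult_distrib)
    have kinv: "l^2 / eps^2 = pi^2 * w^2" unfolding w_def using eps l by (simp add: field_simps power2_eq_square)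
    have T2: "eps^2 / l^2 * L2_norm_sq e1 \<le> Einf^2"
    proof -
      have "eps^2 / l^2 * L2_norm_sq e1 \<le> 1 / (pi^2 * w^2) * (2 * pi * (w * Einf)^2)"
        unfolding k2 using L2e1 w by (intro mult_left_mono) auto
      also have "\<dots> = (2 / pi) * Einf^2" using w by (simp add: field_simps power2_eq_square)
      also have "\<dots> \<le> 1 * Einf^2" using pi_gt3 by (intro mult_right_mono) auto
      finally show ?thesis by simp
    qed
    have T3: "eps^4 / l^4 * L2_norm_sq e2 \<le> N + Einf^2"
    proof -
      have "eps^4 / l^4 * L2_norm_sq e2 \<le> 1 / (pi^4 * w^4) * (2 * (w^2/4)^2 * N + 2 * pi * (2 * (w^2 * Einf)^2))"
        unfolding k4 using L2e2n w by (intro mult_left_mono) auto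
      also have "\<dots> = (1 / (8 * pi^4)) * N + (4 / pi^3) * Einf^2"
        using w by (simp add: field_simps power2_eq_square power4_eq_xxxx power3_eq_cube)
      also have "\<dots> \<le> 1 * N + 1 * Einf^2"
      proof (intro add_mono mult_right_mono)
        have "pi^4 \<ge> 1" using pi_gt3 by (simp add: one_le_power)
        then show "1 / (8 * pi^4) \<le> 1" by (simp add: divide_le_eq)
        have "pi^3 \<ge> 3^3" using pi_gt3 by (intro power_mono) auto
        then show "4 / pi^3 \<le> 1" by (simp add: divide_le_eq)
      qed (use N0 in auto)
      finally show ?thesis by simp
    qed
    have Esq: "Einf^2 \<le> 2 * pi * w^2 * \<kappa>^2 * N"
    proof -
      have "Einf^2 = w^2 * \<kappa>^2 * M^2" unfolding Einf_def by (simp add: power_mult_distrib)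
      also have "\<dots> \<le> w^2 * \<kappa>^2 * (2 * pi * N)" using MN by (intro mult_left_mono) auto
      finally show ?thesis by (simp add: algebra_simps)
    qed
    have Nle: "N \<le> pi^2 * w^2 * N / c^2"
    proof -
      have "c * pi \<ge> 0" using c by simp
      then have "(c * pi)^2 \<le> w^2" using wc by (intro power_mono) auto
      then have "c^2 * pi^2 \<le> w^2" by (simp add: power_mult_distrib)
      moreover have "pi^2 \<ge> 1" using pi_gt3 by (simp add: one_le_power)
      ultimately have "c^2 \<le> w^2 * pi^2"
        by (smt (verit) c mult_le_cancel_left1 zero_less_power mult.commute)
      then have "1 \<le> pi^2 * w^2 / c^2" using c by (simp add: field_simps)
      then have "1 * N \<le> (pi^2 * w^2 / c^2) * N" using N0 by (rule mult_right_mono)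
      then show ?thesis by simp
    qed
    have final: "Linf_norm_sq e + eps^2 / l^2 * L2_norm_sq e1 + eps^4 / l^4 * L2_norm_sq e2
         \<le> (20 * \<kappa>^2 + 1 / c^2) * (l^2 / eps^2) * L2_norm_sq d"
    proof -
      have "Linf_norm_sq e + eps^2 / l^2 * L2_norm_sq e1 + eps^4 / l^4 * L2_norm_sq e2 \<le> 3 * Einf^2 + N"
        using Linf T2 T3 by linarith
      also have "\<dots> \<le> 3 * (2 * pi * w^2 * \<kappa>^2 * N) + pi^2 * w^2 * N / c^2" using Esq Nle by linarith
      also have "\<dots> \<le> 20 * \<kappa>^2 * (pi^2 * w^2) * N + pi^2 * w^2 * N / c^2"
      proof -
        have "6 * pi \<le> 20 * pi^2" using pi_gt3 by (simp add: power2_eq_square)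
        then have "(6 * pi) * (w^2 * \<kappa>^2 * N) \<le> (20 * pi^2) * (w^2 * \<kappa>^2 * N)"
          using N0 by (intro mult_right_mono) auto
        then show ?thesis by (simp add: algebra_simps)
      qed
      also have "\<dots> = (20 * \<kappa>^2 + 1 / c^2) * (l^2 / eps^2) * L2_norm_sq d"
        unfolding kinv L2_norm_sq_def N_def[symmetric] by (simp add: algebra_simps)
      finally show ?thesis .
    qed
    show "\<exists>e e1 e2. periodic_sol eps l d e e1 e2 \<and>
       (\<forall>f f1 f2. periodic_sol eps l d f f1 f2 \<longrightarrow> (\<forall>x\<in>{0..2*pi}. f x = e x)) \<and>
       Linf_norm_sq e + eps^2 / l^2 * L2_norm_sq e1 + eps^4 / l^4 * L2_norm_sq e2
         \<le> (20 * \<kappa>^2 + 1 / c^2) * (l^2 / eps^2) * L2_norm_sq d"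
      using ps uniq final by blast
  qed
qed


end
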